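(* Let $f,g:\mathbb{R}^n\to\mathbb{R}$ satisfy assumptions (A1)–(A4) below, let $\zeta\in[0,1)$ and $x_0\in\Omega=\{x:g(x)\le0\}$. Then the time in which the trajectory $x(t;\zeta,x_0)$ first reaches the boundary of the feasible set $\Omega$ is at most $\frac{C}{1-\zeta}$, where $C$ is a constant independent of $\zeta$.
   Context: Assumptions: (A1) $\lim_{|x|\to\infty} f(x)=+\infty$; (A2) $\nabla f(x)\neq 0$ for all $x\in\Omega$; (A3) $\nabla g(x)\neq 0$ for all $x\in\Omega$; (A4) $f,g$ twice continuously differentiable. For $\zeta\in[0,1)$, $\mathbf{s}_\zeta(x)=-\frac{\nabla f(x)}{|\nabla f(x)|}-\zeta\frac{\nabla g(x)}{|\nabla g(x)|}$, and $x(t;\zeta,x_0)$ is the solution of $\frac{dx}{dt}=\mathbf{s}_\zeta(x)$, $x(0)=x_0$, on its maximal interval of existence in $E=\{x:\nabla f(x)\ne0,\nabla g(x)\ne0\}$. *)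

theory Defs
  imports "HOL-Analysis.Analysis"
begin

definition grad :: "('a::real_inner \<Rightarrow> real) \<Rightarrow> 'a \<Rightarrow> 'a" where
  "grad f x = (THE D. GDERIV f x :> D)"

definition C2 :: "('a::euclidean_space \<Rightarrow> real) \<Rightarrow> bool" where
  "C2 f \<longleftrightarrow> (\<exists>G H. (\<forall>x. GDERIV f x :> G x)
      \<and> (\<forall>x. (G has_derivative blinfun_apply (H x)) (at x))
      \<and> continuous_on UNIV (H :: 'a \<Rightarrow> 'a \<Rightarrow>\<^sub>L 'a))"

definition sfield :: "('a::real_inner \<Rightarrow> real) \<Rightarrow> ('a \<Rightarrow> real) \<Rightarrow> real \<Rightarrow> 'a \<Rightarrow> 'a" where
  "sfield f g \<zeta> x = - (inverse (norm (grad f x))) *\<^sub>R grad f x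
                    - (\<zeta> * inverse (norm (grad g x))) *\<^sub>R grad g x"

definition Eset :: "('a::real_inner \<Rightarrow> real) \<Rightarrow> ('a \<Rightarrow> real) \<Rightarrow> 'a set" where
  "Eset f g = {x. grad f x \<noteq> 0 \<and> grad g x \<noteq> 0}"

definition is_sol ::
  "('a::real_normed_vector \<Rightarrow> 'a) \<Rightarrow> 'a set \<Rightarrow> 'a \<Rightarrow> ereal \<Rightarrow> ereal \<Rightarrow> (real \<Rightarrow> 'a) \<Rightarrow> bool" where
  "is_sol s E x0 a b x \<longleftrightarrow> a < 0 \<and> 0 < b \<and> x 0 = x0 \<and>
     (\<forall>t. a < ereal t \<and> ereal t < b \<longrightarrow>
        x t \<in> E \<and> (x has_vector_derivative s (x t)) (at t))"

definition is_max_sol ::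
  "('a::real_normed_vector \<Rightarrow> 'a) \<Rightarrow> 'a set \<Rightarrow> 'a \<Rightarrow> ereal \<Rightarrow> ereal \<Rightarrow> (real \<Rightarrow> 'a) \<Rightarrow> bool" where
  "is_max_sol s E x0 a b x \<longleftrightarrow> is_sol s E x0 a b x \<and>
     \<not> (\<exists>a' b' y. a' \<le> a \<and> b \<le> b' \<and> (a' < a \<or> b < b') \<and> is_sol s E x0 a' b' y \<and>
           (\<forall>t. a < ereal t \<and> ereal t < b \<longrightarrow> y t = x t))"

end

theory Submission
  imports Defs
begin


lemma local_exist:
  fixes F :: "'a::euclidean_space \<Rightarrow> 'a" and t0 :: real
  assumes r: "0 < r" and M: "0 < M" and L: "0 < L"
   and bnd: "\<forall>z\<in>cball p r. norm (F z) \<le> M"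
   and lip: "\<forall>z\<in>cball p r. \<forall>z'\<in>cball p r. norm (F z - F z') \<le> L * norm (z - z')"
  shows "\<exists>\<delta>>0. \<exists>y. continuous_on {t0..t0+\<delta>} y \<and>
     (\<forall>t\<in>{t0..t0+\<delta>}. y t \<in> cball p r \<and> y t = p + integral {t0..t} (\<lambda>u. F (y u)))"
proof -
  define \<delta> where "\<delta> = min (r/M) (1/(2*L))"
  have dpos: "\<delta> > 0" using r M L by (simp add: \<delta>_def)
  have dM: "\<delta> * M \<le> r" using M by (simp add: \<delta>_def min_def field_simps)
  have dL: "\<delta> * L \<le> 1/2" using L by (simp add: \<delta>_def min_def field_simps)
  have Fc: "continuous_on (cball p r) F"
  proof (rule lipschitz_on_continuous_on)
    show "lipschitz_on L (cball p r) F"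
      using lip L by (auto simp: lipschitz_on_def dist_norm)
  qed
  define S where "S = PiC UNIV (\<lambda>_::real. cball p r)"
  have memS: "\<phi> \<in> S \<longleftrightarrow> (\<forall>t. apply_bcontfun \<phi> t \<in> cball p r)" for \<phi>
    by (auto simp: S_def mem_PiC_iff)
  have Sc: "complete S" unfolding S_def
    by (simp add: complete_eq_closed closed_PiC)
  have Sne: "S \<noteq> {}"
  proof -
    have "const_bcontfun p \<in> S" using r by (simp add: memS const_bcontfun.rep_eq)
    then show ?thesis by auto
  qed
  define I where "I = {t0..t0+\<delta>}"
  have cbI: "cbox t0 (t0+\<delta>) = I" by (simp add: I_def)
  have Fphi: "continuous_on I (\<lambda>u. F (apply_bcontfun \<phi> u))" if "\<phi> \<in> S" for \<phi>
    by (rule continuous_on_compose2[OF Fc continuous_on_apply_bcontfun]) (use that memS in auto)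
  define h where "h \<phi> s = p + integral {t0..s} (\<lambda>u. F (apply_bcontfun \<phi> u))" for \<phi> s
  have hc: "continuous_on I (h \<phi>)" if "\<phi> \<in> S" for \<phi>
    unfolding h_def I_def
    by (intro continuous_intros indefinite_integral_continuous_1 integrable_continuous_real)
       (use Fphi[OF that] in \<open>simp add: I_def\<close>)
  have hb: "norm (h \<phi> s - p) \<le> r" if "\<phi> \<in> S" "s \<in> I" for \<phi> s
  proof -
    have "norm (integral {t0..s} (\<lambda>u. F (apply_bcontfun \<phi> u))) \<le> M * (s - t0)"
      apply (rule integral_bound)
      using that(2) apply (simp add: I_def)
      using Fphi[OF that(1)] that(2) apply (auto simp: I_def intro: continuous_on_subset)[1]
      using bnd that(1) memS by blast
    also have "\<dots> \<le> M * \<delta>" using that(2) M by (simp add: I_def)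
    also have "\<dots> \<le> r" using dM by (simp add: mult.commute)
    finally show ?thesis by (simp add: h_def)
  qed
  define T where "T \<phi> = Bcontfun (\<lambda>t. h \<phi> (clamp t0 (t0+\<delta>) t))" for \<phi>
  have Tapp: "apply_bcontfun (T \<phi>) = (\<lambda>t. h \<phi> (clamp t0 (t0+\<delta>) t))" if "\<phi> \<in> S" for \<phi>
  proof -
    have "(\<lambda>t. h \<phi> (clamp t0 (t0+\<delta>) t)) \<in> bcontfun"
      unfolding bcontfun_def
    proof (intro CollectI conjI)
      show "continuous_on UNIV (\<lambda>t. h \<phi> (clamp t0 (t0+\<delta>) t))"
        by (rule clamp_continuous_on) (use hc[OF that] cbI in simp)
      show "bounded (range (\<lambda>t. h \<phi> (clamp t0 (t0+\<delta>) t)))"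
        by (rule clamp_bounded) (use hc[OF that] cbI in \<open>auto intro: compact_imp_bounded compact_continuous_image simp: I_def\<close>)
    qed
    then show ?thesis by (simp add: T_def Bcontfun_inverse)
  qed
  have clI: "clamp t0 (t0+\<delta>) t \<in> I" for t
    using clamp_in_interval[of t0 "t0+\<delta>" t] dpos by (simp add: I_def)
  have TS: "T ` S \<subseteq> S"
  proof
    fix \<psi> assume "\<psi> \<in> T ` S"
    then obtain \<phi> where \<phi>: "\<phi> \<in> S" "\<psi> = T \<phi>" by auto
    show "\<psi> \<in> S" unfolding memS \<phi>(2) Tapp[OF \<phi>(1)]
      using hb[OF \<phi>(1) clI] by (simp add: dist_norm norm_minus_commute)
  qed
  have contr: "dist (T \<phi>) (T \<psi>) \<le> (1/2) * dist \<phi> \<psi>" if "\<phi> \<in> S" "\<psi> \<in> S" for \<phi> \<psi>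
  proof (rule dist_bound)
    fix t
    define s where "s = clamp t0 (t0+\<delta>) t"
    have s: "s \<in> I" using clI s_def by simp
    have i1: "(\<lambda>u. F (apply_bcontfun \<phi> u)) integrable_on {t0..s}"
      using Fphi[OF that(1)] s by (auto simp: I_def intro!: integrable_continuous_real intro: continuous_on_subset)
    have i2: "(\<lambda>u. F (apply_bcontfun \<psi> u)) integrable_on {t0..s}"
      using Fphi[OF that(2)] s by (auto simp: I_def intro!: integrable_continuous_real intro: continuous_on_subset)
    have "dist (T \<phi> t) (T \<psi> t) = norm (integral {t0..s} (\<lambda>u. F (apply_bcontfun \<phi> u)) - integral {t0..s} (\<lambda>u. F (apply_bcontfun \<psi> u)))"
      by (simp add: Tapp that h_def s_def dist_norm)
    also have "\<dots> = norm (integral {t0..s} (\<lambda>u. F (apply_bcontfun \<phi> u) - F (apply_bcontfun \<psi> u)))"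
      by (simp add: integral_diff[OF i1 i2])
    also have "\<dots> \<le> (L * dist \<phi> \<psi>) * (s - t0)"
    proof (rule integral_bound)
      show "t0 \<le> s" using s by (simp add: I_def)
      show "continuous_on {t0..s} (\<lambda>u. F (apply_bcontfun \<phi> u) - F (apply_bcontfun \<psi> u))"
        using Fphi[OF that(1)] Fphi[OF that(2)] s
        by (auto simp: I_def intro!: continuous_intros intro: continuous_on_subset)
      fix u assume "u \<in> {t0..s}"
      have "norm (F (apply_bcontfun \<phi> u) - F (apply_bcontfun \<psi> u)) \<le> L * norm (apply_bcontfun \<phi> u - apply_bcontfun \<psi> u)"
        using lip that memS by blast
      also have "\<dots> \<le> L * dist \<phi> \<psi>"
        using dist_bounded[of \<phi> u \<psi>] L by (simp add: dist_norm)
      finally show "norm (F (apply_bcontfun \<phi> u) - F (apply_bcontfun \<psi> u)) \<le> L * dist \<phi> \<psi>" .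
    qed
    also have "\<dots> \<le> (L * dist \<phi> \<psi>) * \<delta>"
      using s L by (intro mult_left_mono) (auto simp: I_def)
    also have "\<dots> \<le> (1/2) * dist \<phi> \<psi>"
      using dL by (metis mult.commute mult.left_commute mult_right_mono zero_le_dist)
    finally show "dist (T \<phi> t) (T \<psi> t) \<le> (1/2) * dist \<phi> \<psi>" .
  qed
  obtain \<phi> where \<phi>: "\<phi> \<in> S" "T \<phi> = \<phi>"
    using Banach_fix[OF Sc Sne _ _ TS contr] by auto
  show ?thesis
  proof (intro exI conjI ballI)
    show "\<delta> > 0" by fact
    show "continuous_on {t0..t0+\<delta>} (apply_bcontfun \<phi>)" by simp
    fix t assume t: "t \<in> {t0..t0+\<delta>}"
    show "apply_bcontfun \<phi> t \<in> cball p r" using \<phi> memS by blast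
    have "apply_bcontfun \<phi> t = apply_bcontfun (T \<phi>) t" using \<phi> by simp
    also have "\<dots> = h \<phi> t" using Tapp[OF \<phi>(1)] t by simp
    finally show "apply_bcontfun \<phi> t = p + integral {t0..t} (\<lambda>u. F (apply_bcontfun \<phi> u))"
      by (simp add: h_def)
  qed
qed



lemma gderiv_unique:
  assumes "GDERIV f x :> D1" "GDERIV f x :> D2" shows "D1 = D2"
proof -
  have "(\<lambda>h. inner h D1) = (\<lambda>h. inner h D2)"
    using has_derivative_unique assms unfolding gderiv_def by blast
  then have "inner (D1 - D2) D1 = inner (D1 - D2) D2" by metis
  then have "inner (D1 - D2) (D1 - D2) = 0" by (simp add: inner_diff_right)
  then show ?thesis by simp
qed

lemma grad_eq: assumes "GDERIV f x :> D" shows "grad f x = D"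
  unfolding grad_def using assms gderiv_unique by blast

lemma C2_grad:
  assumes "C2 f"
  shows "\<exists>H. (\<forall>x. GDERIV f x :> grad f x) \<and> (\<forall>x. (grad f has_derivative blinfun_apply (H x)) (at x))
     \<and> continuous_on UNIV H"
proof -
  obtain G H where GH: "\<forall>x. GDERIV f x :> G x" "\<forall>x. (G has_derivative blinfun_apply (H x)) (at x)"
    "continuous_on UNIV H" using assms unfolding C2_def by blast
  have "grad f = G" using GH(1) grad_eq by blast
  then show ?thesis using GH by auto
qed

lemma C2_grad_cont:
  assumes "C2 f" shows "continuous_on UNIV (grad f)"
proof -
  obtain H where "\<forall>x. (grad f has_derivative blinfun_apply (H x)) (at x)"
    using C2_grad[OF assms] by blast
  then show ?thesis
    by (metis continuous_at_imp_continuous_on has_derivative_continuous)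
qed

lemma grad_lip:
  fixes G :: "'a::euclidean_space \<Rightarrow> 'a"
  assumes "\<forall>x. (G has_derivative blinfun_apply (H x)) (at x)" "continuous_on UNIV H"
  shows "\<exists>K>0. \<forall>x\<in>cball p 1. \<forall>y\<in>cball p 1. norm (G x - G y) \<le> K * norm (x - y)"
proof -
  have "bounded (H ` cball p 1)"
    by (intro compact_imp_bounded compact_continuous_image continuous_on_subset[OF assms(2)]) auto
  then obtain K where K0: "K > 0" "\<forall>y\<in>H ` cball p 1. norm y \<le> K" unfolding bounded_pos by metis
  then have K: "K > 0" "\<forall>x\<in>cball p 1. norm (H x) \<le> K" by auto
  have d: "(G has_derivative blinfun_apply (H z)) (at z within cball p 1)" for z
    using assms(1) has_derivative_at_withinI by blast
  have o: "onorm (blinfun_apply (H z)) \<le> K" if "z \<in> cball p 1" for z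
    using K(2) that norm_blinfun.rep_eq by metis
  have "\<forall>x\<in>cball p 1. \<forall>y\<in>cball p 1. norm (G x - G y) \<le> K * norm (x - y)"
  proof (intro ballI)
    fix x y assume xy: "x \<in> cball p 1" "y \<in> cball p 1"
    show "norm (G x - G y) \<le> K * norm (x - y)"
      using differentiable_bound[of "cball p 1" G "\<lambda>z. blinfun_apply (H z)" K x y] d o xy by simp
  qed
  then show ?thesis using K(1) by blast
qed

lemma normalize_lip:
  fixes u v :: "'a::real_normed_vector"
  assumes "u \<noteq> 0" "v \<noteq> 0"
  shows "norm (inverse (norm u) *\<^sub>R u - inverse (norm v) *\<^sub>R v) \<le> 2 * norm (u - v) / norm u"
proof -
  have nu: "norm u > 0" "norm v > 0" using assms by auto
  have eq: "inverse (norm u) *\<^sub>R u - inverse (norm v) *\<^sub>R v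
     = inverse (norm u) *\<^sub>R (u - v) + ((norm v - norm u) / (norm u * norm v)) *\<^sub>R v"
  proof -
    have c: "(norm v - norm u) / (norm u * norm v) = inverse (norm u) - inverse (norm v)"
      using nu by (simp add: field_simps)
    show ?thesis unfolding c by (simp add: scaleR_diff_left scaleR_diff_right algebra_simps)
  qed
  have "norm (((norm v - norm u) / (norm u * norm v)) *\<^sub>R v) = \<bar>norm v - norm u\<bar> / norm u"
    using nu by (simp add: field_simps)
  also have "\<dots> \<le> norm (u - v) / norm u"
    using nu by (intro divide_right_mono) (auto simp: norm_triangle_ineq3 abs_le_iff norm_minus_commute
       intro: order.trans[OF _ norm_triangle_ineq3])
  finally have "norm (((norm v - norm u) / (norm u * norm v)) *\<^sub>R v) \<le> norm (u - v) / norm u" .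
  moreover have "norm (inverse (norm u) *\<^sub>R (u - v)) = norm (u - v) / norm u"
    by (simp only: norm_scaleR abs_inverse abs_norm_cancel) (simp add: divide_inverse mult.commute)
  moreover have "norm (inverse (norm u) *\<^sub>R (u - v) + ((norm v - norm u) / (norm u * norm v)) *\<^sub>R v)
     \<le> norm (inverse (norm u) *\<^sub>R (u - v)) + norm (((norm v - norm u) / (norm u * norm v)) *\<^sub>R v)"
    by (rule norm_triangle_ineq)
  moreover have "2 * norm (u - v) / norm u = norm (u - v) / norm u + norm (u - v) / norm u"
    by simp
  ultimately show ?thesis unfolding eq by linarith
qed



lemma sfield_cont:
  assumes "C2 f" "C2 g"
  shows "continuous_on (Eset f g) (sfield f g \<zeta>)"
proof -
  have cf: "continuous_on (Eset f g) (grad f)" and cg: "continuous_on (Eset f g) (grad g)"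
    using C2_grad_cont[OF assms(1)] C2_grad_cont[OF assms(2)] continuous_on_subset by blast+
  show ?thesis unfolding sfield_def[abs_def]
    by (intro continuous_intros cf cg) (auto simp: Eset_def)
qed

lemma sfield_bound:
  assumes "0 \<le> \<zeta>" "\<zeta> \<le> 1"
  shows "norm (sfield f g \<zeta> z) \<le> 2"
proof -
  have "norm (sfield f g \<zeta> z) \<le> norm (inverse (norm (grad f z)) *\<^sub>R grad f z)
      + norm ((\<zeta> * inverse (norm (grad g z))) *\<^sub>R grad g z)"
  proof -
    have t: "norm (sfield f g \<zeta> z) \<le> norm ((- inverse (norm (grad f z))) *\<^sub>R grad f z)
      + norm ((\<zeta> * inverse (norm (grad g z))) *\<^sub>R grad g z)"
      unfolding sfield_def by (rule norm_triangle_ineq4)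
    have "norm ((- inverse (norm (grad f z))) *\<^sub>R grad f z) = norm (inverse (norm (grad f z)) *\<^sub>R grad f z)"
      by (simp only: norm_scaleR abs_minus_cancel)
    then show ?thesis using t by linarith
  qed
  also have "\<dots> \<le> 1 + 1"
  proof (intro add_mono)
    show "norm (inverse (norm (grad f z)) *\<^sub>R grad f z) \<le> 1"
      by (cases "grad f z = 0") auto
    have "norm ((\<zeta> * inverse (norm (grad g z))) *\<^sub>R grad g z) = \<zeta> * norm (inverse (norm (grad g z)) *\<^sub>R grad g z)"
      using assms by simp
    also have "\<dots> \<le> 1 * 1" using assms
      by (intro mult_mono) (cases "grad g z = 0"; auto)+
    finally show "norm ((\<zeta> * inverse (norm (grad g z))) *\<^sub>R grad g z) \<le> 1" by simp
  qed
  finally show ?thesis by simp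
qed

lemma grad_local:
  fixes f :: "'a::euclidean_space \<Rightarrow> real"
  assumes "C2 f" "grad f p \<noteq> 0"
  shows "\<exists>r>0. \<exists>K>0. r \<le> 1 \<and> (\<forall>z\<in>cball p r. norm (grad f z) \<ge> norm (grad f p) / 2) \<and>
     (\<forall>x\<in>cball p 1. \<forall>y\<in>cball p 1. norm (grad f x - grad f y) \<le> K * norm (x - y))"
proof -
  obtain H where H: "\<forall>x. (grad f has_derivative blinfun_apply (H x)) (at x)" "continuous_on UNIV H"
    using C2_grad[OF assms(1)] by blast
  obtain K where K: "K > 0" "\<forall>x\<in>cball p 1. \<forall>y\<in>cball p 1. norm (grad f x - grad f y) \<le> K * norm (x - y)"
    using grad_lip[OF H] by blast
  have "continuous (at p) (grad f)"
    using C2_grad_cont[OF assms(1)] continuous_on_eq_continuous_at by blast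
  then obtain d where d: "d > 0" "\<forall>y. dist y p < d \<longrightarrow> dist (grad f y) (grad f p) < norm (grad f p) / 2"
    using assms(2) unfolding continuous_at_eps_delta by (metis half_gt_zero zero_less_norm_iff)
  define r where "r = min 1 (d/2)"
  have "norm (grad f z) \<ge> norm (grad f p) / 2" if "z \<in> cball p r" for z
  proof -
    have "dist z p < d" using that d by (auto simp: r_def dist_commute)
    then have "dist (grad f z) (grad f p) < norm (grad f p) / 2" using d by blast
    then show ?thesis using norm_triangle_ineq2[of "grad f p" "grad f z"]
      by (simp add: dist_norm norm_minus_commute)
  qed
  moreover have "r > 0" "r \<le> 1" using d by (auto simp: r_def)
  ultimately show ?thesis using K by blast
qed

lemma sfield_lip:
  fixes f g :: "'a::euclidean_space \<Rightarrow> real"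
  assumes "C2 f" "C2 g" "p \<in> Eset f g" "0 \<le> \<zeta>" "\<zeta> \<le> 1"
  shows "\<exists>r>0. \<exists>L>0. cball p r \<subseteq> Eset f g \<and>
     (\<forall>z\<in>cball p r. \<forall>z'\<in>cball p r. norm (sfield f g \<zeta> z - sfield f g \<zeta> z') \<le> L * norm (z - z'))"
proof -
  have gp: "grad f p \<noteq> 0" "grad g p \<noteq> 0" using assms(3) by (auto simp: Eset_def)
  obtain r1 K1 where R1: "r1 > 0" "K1 > 0" "r1 \<le> 1" "\<forall>z\<in>cball p r1. norm (grad f z) \<ge> norm (grad f p) / 2"
    "\<forall>x\<in>cball p 1. \<forall>y\<in>cball p 1. norm (grad f x - grad f y) \<le> K1 * norm (x - y)"
    using grad_local[OF assms(1) gp(1)] by blast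
  obtain r2 K2 where R2: "r2 > 0" "K2 > 0" "r2 \<le> 1" "\<forall>z\<in>cball p r2. norm (grad g z) \<ge> norm (grad g p) / 2"
    "\<forall>x\<in>cball p 1. \<forall>y\<in>cball p 1. norm (grad g x - grad g y) \<le> K2 * norm (x - y)"
    using grad_local[OF assms(2) gp(2)] by blast
  define r where "r = min r1 r2"
  define c where "c = min (norm (grad f p) / 2) (norm (grad g p) / 2)"
  have c: "c > 0" using gp by (simp add: c_def)
  have cf: "norm (grad f z) \<ge> c" and cg: "norm (grad g z) \<ge> c" if "z \<in> cball p r" for z
    using R1(4) R2(4) that by (force simp: r_def c_def)+
  have sub1: "cball p r \<subseteq> cball p 1" using R1(3) by (auto simp: r_def)
  have E: "cball p r \<subseteq> Eset f g"
    using cf cg c by (force simp: Eset_def)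
  define L where "L = 2 / c * K1 + 2 / c * K2"
  have L: "L > 0" using c R1 R2 by (simp add: L_def add_pos_pos)
  have "norm (sfield f g \<zeta> z - sfield f g \<zeta> z') \<le> L * norm (z - z')"
    if z: "z \<in> cball p r" "z' \<in> cball p r" for z z'
  proof -
    define A where "A = inverse (norm (grad f z)) *\<^sub>R grad f z - inverse (norm (grad f z')) *\<^sub>R grad f z'"
    define B where "B = inverse (norm (grad g z)) *\<^sub>R grad g z - inverse (norm (grad g z')) *\<^sub>R grad g z'"
    have eq: "sfield f g \<zeta> z - sfield f g \<zeta> z' = - A - \<zeta> *\<^sub>R B"
      by (simp add: sfield_def A_def B_def algebra_simps)
    have nz: "grad f z \<noteq> 0" "grad f z' \<noteq> 0" "grad g z \<noteq> 0" "grad g z' \<noteq> 0"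
      using E z by (auto simp: Eset_def)
    have "norm A \<le> 2 * norm (grad f z - grad f z') / norm (grad f z)"
      unfolding A_def by (rule normalize_lip[OF nz(1,2)])
    also have "\<dots> \<le> 2 * norm (grad f z - grad f z') / c"
      using cf[OF z(1)] c by (intro divide_left_mono mult_pos_pos) auto
    also have "\<dots> \<le> 2 * (K1 * norm (z - z')) / c"
      using R1(5) sub1 z c by (intro divide_right_mono mult_left_mono) (blast, simp, simp)
    finally have nA: "norm A \<le> 2 / c * K1 * norm (z - z')" by simp
    have "norm B \<le> 2 * norm (grad g z - grad g z') / norm (grad g z)"
      unfolding B_def by (rule normalize_lip[OF nz(3,4)])
    also have "\<dots> \<le> 2 * norm (grad g z - grad g z') / c"
      using cg[OF z(1)] c by (intro divide_left_mono mult_pos_pos) auto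
    also have "\<dots> \<le> 2 * (K2 * norm (z - z')) / c"
      using R2(5) sub1 z c by (intro divide_right_mono mult_left_mono) (blast, simp, simp)
    finally have nB: "norm B \<le> 2 / c * K2 * norm (z - z')" by simp
    have "norm (\<zeta> *\<^sub>R B) \<le> norm B" using assms(4,5)
      by (simp add: mult_left_le_one_le)
    then have "norm (- A - \<zeta> *\<^sub>R B) \<le> norm A + norm B"
      using norm_triangle_ineq4[of "- A" "\<zeta> *\<^sub>R B"] by simp
    also have "\<dots> \<le> L * norm (z - z')" using nA nB by (simp add: L_def algebra_simps)
    finally show ?thesis unfolding eq .
  qed
  moreover have "r > 0" using R1 R2 by (simp add: r_def)
  ultimately show ?thesis using E L by blast
qed



lemma extend_sol:
  fixes F :: "'a::euclidean_space \<Rightarrow> 'a" and x :: "real \<Rightarrow> 'a" and B :: real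
  assumes sol: "is_sol F E x0 a (ereal B) x"
    and K: "compact K" "K \<subseteq> E" "\<forall>t\<in>{0..<B}. x t \<in> K"
    and Fb: "\<forall>z. norm (F z) \<le> 2"
    and Fc: "continuous_on E F"
    and Fl: "\<forall>p\<in>K. \<exists>r>0. \<exists>L>0. cball p r \<subseteq> E \<and>
        (\<forall>z\<in>cball p r. \<forall>z'\<in>cball p r. norm (F z - F z') \<le> L * norm (z - z'))"
  shows "\<exists>b'. ereal B < b' \<and> (\<exists>y. is_sol F E x0 a b' y \<and> (\<forall>t. a < ereal t \<and> ereal t < ereal B \<longrightarrow> y t = x t))"
proof -
  have a0: "a < 0" and B0: "0 < B" and x00: "x 0 = x0"
    and xs: "\<And>t. a < ereal t \<Longrightarrow> t < B \<Longrightarrow> x t \<in> E \<and> (x has_vector_derivative F (x t)) (at t)"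
    using sol unfolding is_sol_def by auto
  have ina: "a < ereal t" if "0 \<le> t" for t
    using a0 that by (metis ereal_less_eq(3) order_less_le_trans zero_ereal_def)
  have xd: "(x has_vector_derivative F (x t)) (at t)" if "0 \<le> t" "t < B" for t
    using xs ina that by blast
  have xlip: "norm (x s - x t) \<le> 2 * norm (s - t)" if "s \<in> {0..<B}" "t \<in> {0..<B}" for s t
  proof (rule differentiable_bound[where S="{0..<B}" and f'="\<lambda>t h. h *\<^sub>R F (x t)"])
    show "convex {0..<B}" by simp
    show "(x has_derivative (\<lambda>h. h *\<^sub>R F (x u))) (at u within {0..<B})" if "u \<in> {0..<B}" for u
      using xd[of u] that by (auto simp: has_vector_derivative_def intro: has_derivative_at_withinI)
    show "onorm (\<lambda>h. h *\<^sub>R F (x u)) \<le> 2" for u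
      by (rule onorm_le) (use Fb in \<open>auto simp: mult.commute intro: mult_left_mono\<close>)
  qed (use that in auto)
  have uc: "uniformly_continuous_on {0..<B} x"
    unfolding uniformly_continuous_on_def
  proof (intro allI impI)
    fix e :: real assume e: "e > 0"
    show "\<exists>d>0. \<forall>s\<in>{0..<B}. \<forall>t\<in>{0..<B}. dist t s < d \<longrightarrow> dist (x t) (x s) < e"
      by (rule exI[of _ "e/2"]) (use e xlip in \<open>force simp: dist_norm\<close>)
  qed
  obtain g0 where g0: "uniformly_continuous_on {0..B} g0" "\<And>t. t \<in> {0..<B} \<Longrightarrow> x t = g0 t"
    using uniformly_continuous_on_extension_on_closure[OF uc] B0 by (metis closure_atLeastLessThan)
  have g0c: "continuous_on {0..B} g0" using g0(1) uniformly_continuous_imp_continuous by blast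
  define p where "p = g0 B"
  have "g0 ` {0..B} \<subseteq> K"
    using image_closure_subset[of "{0..<B}" g0 K] g0c B0 K g0(2) compact_imp_closed
    by (metis (no_types, lifting) atLeastLessThan_iff closure_atLeastLessThan image_subsetI)
  then have pK: "p \<in> K" using B0 by (auto simp: p_def)
  obtain r L where rL: "r > 0" "L > 0" "cball p r \<subseteq> E"
    "\<forall>z\<in>cball p r. \<forall>z'\<in>cball p r. norm (F z - F z') \<le> L * norm (z - z')"
    using Fl pK by blast
  obtain \<delta> y where dy: "\<delta> > 0" "continuous_on {B..B+\<delta>} y"
    "\<forall>t\<in>{B..B+\<delta>}. y t \<in> cball p r \<and> y t = p + integral {B..t} (\<lambda>u. F (y u))"
    using local_exist[of r 2 L p F B] rL Fb by auto
  have yB: "y B = p" using dy(3) dy(1) by auto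
  define w where "w t = (if t < B then x t else y t)" for t
  have wc1: "continuous_on {0..B} w"
  proof (rule continuous_on_eq[OF g0c])
    fix t assume "t \<in> {0..B}"
    then show "g0 t = w t" using g0(2)[of t] yB by (cases "t < B") (auto simp: w_def p_def)
  qed
  have wc2: "continuous_on {B..B+\<delta>} w"
    by (rule continuous_on_eq[OF dy(2)]) (auto simp: w_def)
  have wc: "continuous_on {0..B+\<delta>} w"
  proof -
    have "{0..B+\<delta>} = {0..B} \<union> {B..B+\<delta>}" using B0 dy(1) by auto
    then show ?thesis using continuous_on_closed_Un[OF closed_atLeastAtMost closed_atLeastAtMost wc1 wc2] by simp
  qed
  have wE: "w t \<in> E" if "t \<in> {0..B+\<delta>}" for t
  proof (cases "t < B")
    case True then show ?thesis using that K(2,3) by (auto simp: w_def)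
  next
    case False
    then have "t \<in> {B..B+\<delta>}" using that by auto
    then have "y t \<in> cball p r" using dy(3) by blast
    then show ?thesis using False rL(3) by (auto simp: w_def)
  qed
  have Fwc: "continuous_on {0..B+\<delta>} (\<lambda>u. F (w u))"
    by (rule continuous_on_compose2[OF Fc wc]) (use wE in auto)
  have Fwi: "(\<lambda>u. F (w u)) integrable_on {0..t}" if "t \<le> B+\<delta>" for t
    using Fwc that by (auto intro!: integrable_continuous_real intro: continuous_on_subset)
  have W1: "w t = x0 + integral {0..t} (\<lambda>u. F (w u))" if "0 \<le> t" "t < B" for t
  proof -
    have "((\<lambda>u. F (w u)) has_integral (x t - x 0)) {0..t}"
    proof (rule fundamental_theorem_of_calculus)
      show "0 \<le> t" by fact
      fix u assume u: "u \<in> {0..t}"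
      then have "(x has_vector_derivative F (x u)) (at u)" using xd that by auto
      moreover have "w u = x u" using u that by (auto simp: w_def)
      ultimately show "(x has_vector_derivative F (w u)) (at u within {0..t})"
        by (auto intro: has_vector_derivative_at_within)
    qed
    then show ?thesis using that x00 by (auto simp: w_def integral_unique)
  qed
  have W2: "w B = x0 + integral {0..B} (\<lambda>u. F (w u))"
  proof -
    define h where "h t = w t - (x0 + integral {0..t} (\<lambda>u. F (w u)))" for t
    have hc: "continuous_on {0..B} h"
      unfolding h_def
      by (intro continuous_intros wc1 indefinite_integral_continuous_1 Fwi) (use dy(1) in simp)
    have "h ` {0..B} \<subseteq> {0}"
      using image_closure_subset[of "{0..<B}" h "{0}"] hc B0 W1 by (auto simp: h_def)
    moreover have "B \<in> {0..B}" using B0 by simp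
    ultimately have "h B = 0" by blast
    then show ?thesis by (simp add: h_def)
  qed
  have W: "w t = x0 + integral {0..t} (\<lambda>u. F (w u))" if "0 \<le> t" "t \<le> B+\<delta>" for t
  proof (cases "t \<le> B")
    case True
    then show ?thesis using W1 W2 that by (cases "t < B") auto
  next
    case False
    have "w t = y t" using False by (simp add: w_def)
    also have "\<dots> = p + integral {B..t} (\<lambda>u. F (y u))" using dy(3) that False by auto
    also have "integral {B..t} (\<lambda>u. F (y u)) = integral {B..t} (\<lambda>u. F (w u))"
      by (rule integral_cong) (auto simp: w_def)
    also have "p = x0 + integral {0..B} (\<lambda>u. F (w u))" using W2 yB by (simp add: w_def)
    also have "x0 + integral {0..B} (\<lambda>u. F (w u)) + integral {B..t} (\<lambda>u. F (w u))
       = x0 + integral {0..t} (\<lambda>u. F (w u))"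
      using Henstock_Kurzweil_Integration.integral_combine[where a=0 and c=B and b=t and f="\<lambda>u. F (w u)"] Fwi[OF that(2)] B0 False by (simp add: add.assoc)
    finally show ?thesis .
  qed
  have wd: "(w has_vector_derivative F (w t)) (at t)" if "a < ereal t" "t < B + \<delta>" for t
  proof (cases "t < B")
    case True
    have "(x has_vector_derivative F (x t)) (at t)" using xs that True by blast
    moreover have "w t = x t" using True by (simp add: w_def)
    ultimately have "(x has_vector_derivative F (w t)) (at t)" by simp
    then show ?thesis
      by (rule has_vector_derivative_transform_within_open[where S="{..<B}"]) (use True in \<open>auto simp: w_def\<close>)
  next
    case False
    have t0: "0 < t" using False B0 by simp
    have "((\<lambda>s. x0 + integral {0..s} (\<lambda>u. F (w u))) has_vector_derivative F (w t)) (at t within {0..B+\<delta>})"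
    proof -
      have "((\<lambda>s. integral {0..s} (\<lambda>u. F (w u))) has_vector_derivative F (w t)) (at t within {0..B+\<delta>})"
        by (rule integral_has_vector_derivative[OF Fwc]) (use t0 that in auto)
      from has_vector_derivative_add[OF has_vector_derivative_const[of x0] this] show ?thesis by simp
    qed
    then have "((\<lambda>s. x0 + integral {0..s} (\<lambda>u. F (w u))) has_vector_derivative F (w t)) (at t)"
      using at_within_Icc_at[of 0 t "B+\<delta>"] t0 that by simp
    then show ?thesis
      by (rule has_vector_derivative_transform_within_open[where S="{0<..<B+\<delta>}"])
         (use t0 that W in auto)
  qed
  have "is_sol F E x0 a (ereal (B+\<delta>)) w"
    unfolding is_sol_def
  proof (intro conjI allI impI)
    show "a < 0" by fact
    show "0 < ereal (B+\<delta>)" using B0 dy(1) by simp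
    show "w 0 = x0" using B0 x00 by (simp add: w_def)
    fix t assume t: "a < ereal t \<and> ereal t < ereal (B + \<delta>)"
    show "w t \<in> E"
    proof (cases "t < B")
      case True then show ?thesis using xs t by (simp add: w_def)
    next
      case False then show ?thesis using wE t B0 by auto
    qed
    show "(w has_vector_derivative F (w t)) (at t)" using wd t by auto
  qed
  moreover have "ereal B < ereal (B+\<delta>)" using dy(1) by simp
  moreover have "\<forall>t. a < ereal t \<and> ereal t < ereal B \<longrightarrow> w t = x t" by (simp add: w_def)
  ultimately show ?thesis by blast
qed



lemma sfield_descent:
  assumes "z \<in> Eset f g" "0 \<le> \<zeta>"
  shows "inner (grad f z) (sfield f g \<zeta> z) \<le> - (1 - \<zeta>) * norm (grad f z)"
proof -
  have nz: "grad f z \<noteq> 0" "grad g z \<noteq> 0" using assms by (auto simp: Eset_def)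
  have eq: "inner (grad f z) (sfield f g \<zeta> z) = - norm (grad f z)
      - \<zeta> * (inner (grad f z) (grad g z) / norm (grad g z))"
    using nz by (simp add: sfield_def inner_diff_right power2_norm_eq_inner[symmetric] power2_eq_square
      divide_inverse mult.commute mult.left_commute)
  have "- (norm (grad f z) * norm (grad g z)) \<le> inner (grad f z) (grad g z)"
    using Cauchy_Schwarz_ineq2[of "grad f z" "grad g z"] by linarith
  then have "- norm (grad f z) \<le> inner (grad f z) (grad g z) / norm (grad g z)"
    using nz by (simp add: field_simps)
  then have "\<zeta> * (- norm (grad f z)) \<le> \<zeta> * (inner (grad f z) (grad g z) / norm (grad g z))"
    using assms(2) by (rule mult_left_mono)
  then show ?thesis unfolding eq by (simp add: algebra_simps)
qed

theorem lemma5p10: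
  fixes f g :: "real ^ 'n \<Rightarrow> real" and x0 :: "real ^ 'n"
  defines "\<Omega> \<equiv> {x. g x \<le> 0}"
  assumes A1: "filterlim f at_top at_infinity"
    and A2: "\<forall>x\<in>\<Omega>. grad f x \<noteq> 0"
    and A3: "\<forall>x\<in>\<Omega>. grad g x \<noteq> 0"
    and A4: "C2 f" "C2 g"
    and x0: "x0 \<in> \<Omega>"
  shows "\<exists>C::real. \<forall>\<zeta> a b x. 0 \<le> \<zeta> \<and> \<zeta> < 1 \<and>
           is_max_sol (sfield f g \<zeta>) (Eset f g) x0 a b x \<longrightarrow>
           (\<exists>\<tau>. 0 \<le> \<tau> \<and> ereal \<tau> < b \<and> x \<tau> \<in> frontier \<Omega> \<and> \<tau> \<le> C / (1 - \<zeta>))"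
proof -
  have Gf: "\<forall>x. GDERIV f x :> grad f x" using C2_grad[OF A4(1)] by blast
  have Gg: "\<forall>x. GDERIV g x :> grad g x" using C2_grad[OF A4(2)] by blast
  have fc: "continuous_on UNIV f"
    using Gf unfolding gderiv_def by (metis continuous_at_imp_continuous_on has_derivative_continuous)
  have gc: "continuous_on UNIV g"
    using Gg unfolding gderiv_def by (metis continuous_at_imp_continuous_on has_derivative_continuous)
  have gfc: "continuous_on UNIV (grad f)" by (rule C2_grad_cont[OF A4(1)])
  define K where "K = \<Omega> \<inter> {x. f x \<le> f x0}"
  have KE: "K \<subseteq> Eset f g" using A2 A3 by (auto simp: K_def Eset_def)
  have KO: "K \<subseteq> \<Omega>" by (auto simp: K_def)
  have x0K: "x0 \<in> K" using x0 by (simp add: K_def)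
  have Kcl: "closed K" unfolding K_def \<Omega>_def
    by (intro closed_Int closed_Collect_le continuous_on_const fc gc)
  have "eventually (\<lambda>x. f x0 + 1 \<le> f x) at_infinity"
    using A1 unfolding filterlim_at_top by blast
  then obtain R where R: "\<forall>x. R \<le> norm x \<longrightarrow> f x0 + 1 \<le> f x"
    unfolding eventually_at_infinity by blast
  have "K \<subseteq> cball 0 R"
  proof
    fix z assume "z \<in> K"
    then have "f z \<le> f x0" by (simp add: K_def)
    then have "\<not> R \<le> norm z" using R by force
    then show "z \<in> cball 0 R" by simp
  qed
  then have Kc: "compact K" using Kcl
    by (metis bounded_cball bounded_subset compact_eq_bounded_closed)
  obtain xm where xm: "xm \<in> K" "\<forall>y\<in>K. norm (grad f xm) \<le> norm (grad f y)"
    using continuous_attains_inf[OF Kc _ continuous_on_norm[OF continuous_on_subset[OF gfc]]] x0K by blast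
  define m where "m = norm (grad f xm)"
  have m: "m > 0" using xm(1) KO A2 by (auto simp: m_def)
  have mK: "m \<le> norm (grad f y)" if "y \<in> K" for y using xm that by (simp add: m_def)
  obtain xf where xf: "xf \<in> K" "\<forall>y\<in>K. f xf \<le> f y"
    using continuous_attains_inf[OF Kc _ continuous_on_subset[OF fc]] x0K by blast
  define C where "C = (f x0 - f xf) / m + 1"
  have mC: "m * C = f x0 - f xf + m" using m by (simp add: C_def field_simps)
  show ?thesis
  proof (rule exI[of _ C], intro allI impI, elim conjE)
    fix \<zeta> :: real and a b and x :: "real \<Rightarrow> real ^ 'n"
    assume z0: "0 \<le> \<zeta>" and z1: "\<zeta> < 1" and ms: "is_max_sol (sfield f g \<zeta>) (Eset f g) x0 a b x"
    define F where "F = sfield f g \<zeta>"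
    have sol: "is_sol F (Eset f g) x0 a b x" using ms by (simp add: is_max_sol_def F_def)
    have a0: "a < 0" and b0: "0 < b" and x00: "x 0 = x0"
      and xs: "\<And>t. a < ereal t \<Longrightarrow> ereal t < b \<Longrightarrow> x t \<in> Eset f g \<and> (x has_vector_derivative F (x t)) (at t)"
      using sol unfolding is_sol_def by auto
    have ina: "a < ereal t" if "0 \<le> t" for t
      using a0 that by (metis ereal_less_eq(3) order_less_le_trans zero_ereal_def)
    define Ts where "Ts = C / (1 - \<zeta>)"
    have fd: "DERIV (\<lambda>t. f (x t)) t :> inner (grad f (x t)) (F (x t))"
      if "a < ereal t" "ereal t < b" for t
    proof -
      have "(x has_derivative (\<lambda>h. h *\<^sub>R F (x t))) (at t)"
        using xs[OF that] by (simp add: has_vector_derivative_def)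
      moreover have "(f has_derivative (\<lambda>h. inner h (grad f (x t)))) (at (x t))"
        using Gf unfolding gderiv_def by blast
      ultimately have "((\<lambda>t. f (x t)) has_derivative (\<lambda>h. inner (h *\<^sub>R F (x t)) (grad f (x t)))) (at t)"
        by (rule has_derivative_compose)
      moreover have "(\<lambda>h. inner (h *\<^sub>R F (x t)) (grad f (x t))) = (*) (inner (grad f (x t)) (F (x t)))"
        by (auto simp: inner_commute)
      ultimately show ?thesis by (simp add: has_field_derivative_def)
    qed
    have desc: "inner (grad f (x t)) (F (x t)) \<le> - (1 - \<zeta>) * norm (grad f (x t))"
      if "a < ereal t" "ereal t < b" for t
      using sfield_descent[of "x t" f g \<zeta>] z0 xs[OF that] by (simp add: F_def)
    show "\<exists>\<tau>. 0 \<le> \<tau> \<and> ereal \<tau> < b \<and> x \<tau> \<in> frontier \<Omega> \<and> \<tau> \<le> C / (1 - \<zeta>)"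
    proof (rule ccontr)
      assume nt: "\<not> (\<exists>\<tau>. 0 \<le> \<tau> \<and> ereal \<tau> < b \<and> x \<tau> \<in> frontier \<Omega> \<and> \<tau> \<le> C / (1 - \<zeta>))"
      have Q: "(\<forall>t\<in>{0..T}. x t \<in> K) \<and> f (x T) \<le> f x0 - (1 - \<zeta>) * m * T"
        if T: "0 \<le> T" "ereal T < b" "T \<le> Ts" for T
      proof -
        have tin: "a < ereal t \<and> ereal t < b" if "t \<in> {0..T}" for t
        proof -
          have "ereal t \<le> ereal T" using that by simp
          then have "ereal t < b" using T(2) by (rule order.strict_trans1)
          moreover have "a < ereal t" using ina that by simp
          ultimately show ?thesis by simp
        qed
        have xc: "continuous_on {0..T} x"
          using tin xs by (metis continuous_at_imp_continuous_on has_vector_derivative_continuous)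
        have conn: "connected (x ` {0..T})"
          by (rule connected_continuous_image[OF xc]) simp
        have sub: "x ` {0..T} \<subseteq> \<Omega>"
        proof (rule ccontr)
          assume "\<not> x ` {0..T} \<subseteq> \<Omega>"
          then have "x ` {0..T} - \<Omega> \<noteq> {}" by blast
          moreover have "x ` {0..T} \<inter> \<Omega> \<noteq> {}" using x00 x0 T by force
          ultimately have "x ` {0..T} \<inter> frontier \<Omega> \<noteq> {}"
            using connected_Int_frontier[OF conn] by blast
          then obtain t where t: "t \<in> {0..T}" "x t \<in> frontier \<Omega>" by blast
          then show False using nt tin[OF t(1)] T by (auto simp: Ts_def)
        qed
        have fdec: "f (x t) \<le> f x0" if t: "t \<in> {0..T}" for t
        proof -
          have "f (x t) \<le> f (x 0)"
          proof (rule DERIV_nonpos_imp_nonincreasing[of 0 t "\<lambda>t. f (x t)"])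
            show "0 \<le> t" using t by simp
            fix s assume s: "0 \<le> s" "s \<le> t"
            then have st: "a < ereal s \<and> ereal s < b" using tin t by auto
            have "- (1 - \<zeta>) * norm (grad f (x s)) \<le> 0" using z1 by (simp add: mult_nonpos_nonneg)
            then show "\<exists>y. DERIV (\<lambda>t. f (x t)) s :> y \<and> y \<le> 0"
              using fd[of s] desc[of s] st by (meson order_trans)
          qed
          then show ?thesis using x00 by simp
        qed
        have inK: "\<forall>t\<in>{0..T}. x t \<in> K" using sub fdec by (auto simp: K_def)
        have "f (x T) + (1 - \<zeta>) * m * T \<le> f (x 0) + (1 - \<zeta>) * m * 0"
        proof (rule DERIV_nonpos_imp_nonincreasing[of 0 T "\<lambda>t. f (x t) + (1 - \<zeta>) * m * t"])
          show "0 \<le> T" by fact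
          fix s assume s: "0 \<le> s" "s \<le> T"
          then have st: "a < ereal s \<and> ereal s < b" using tin by auto
          have d: "DERIV (\<lambda>t. f (x t) + (1 - \<zeta>) * m * t) s :> inner (grad f (x s)) (F (x s)) + (1 - \<zeta>) * m"
            using fd[of s] st by (auto intro!: derivative_eq_intros)
          have "(1 - \<zeta>) * m \<le> (1 - \<zeta>) * norm (grad f (x s))"
            using mK inK s z1 by (intro mult_left_mono) auto
          moreover have "- (1 - \<zeta>) * norm (grad f (x s)) = - ((1 - \<zeta>) * norm (grad f (x s)))" by (simp only: mult_minus_left)
          ultimately have "inner (grad f (x s)) (F (x s)) + (1 - \<zeta>) * m \<le> 0"
            using desc[of s] st by linarith
          then show "\<exists>y. DERIV (\<lambda>t. f (x t) + (1 - \<zeta>) * m * t) s :> y \<and> y \<le> 0"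
            using d by blast
        qed
        then show ?thesis using inK x00 by (simp add: algebra_simps)
      qed
      show False
      proof (cases "b \<le> ereal Ts")
        case False
        have "f xf \<le> f x0" using xf x0K by blast
        then have "0 \<le> (f x0 - f xf) / m" using m by simp
        then have "0 \<le> C" by (simp add: C_def)
        then have Ts0: "0 \<le> Ts" using z1 unfolding Ts_def by simp
        have QT: "(\<forall>t\<in>{0..Ts}. x t \<in> K) \<and> f (x Ts) \<le> f x0 - (1 - \<zeta>) * m * Ts"
          using Q[of Ts] Ts0 False by auto
        have "(1 - \<zeta>) * m * Ts = m * C" using z1 by (simp add: Ts_def field_simps)
        moreover have "f xf \<le> f (x Ts)" using QT xf Ts0 by auto
        ultimately show False using QT mC m by linarith
      next
        case True
        obtain B where bB: "b = ereal B" using True b0 by (cases b) auto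
        have B0: "0 < B" using b0 bB by simp
        have xK: "\<forall>t\<in>{0..<B}. x t \<in> K"
        proof
          fix t assume t: "t \<in> {0..<B}"
          have "t \<le> Ts" using t True bB by auto
          then show "x t \<in> K" using Q[of t] t bB by auto
        qed
        have Fl: "\<forall>p\<in>K. \<exists>r>0. \<exists>L>0. cball p r \<subseteq> Eset f g \<and>
          (\<forall>z\<in>cball p r. \<forall>z'\<in>cball p r. norm (F z - F z') \<le> L * norm (z - z'))"
          using sfield_lip[OF A4(1) A4(2) _ z0] z1 KE unfolding F_def by (meson less_imp_le subsetD)
        have z1': "\<zeta> \<le> 1" using z1 by simp
        have Fb: "\<forall>z. norm (F z) \<le> 2" unfolding F_def using sfield_bound[OF z0 z1'] by blast
        have Fc: "continuous_on (Eset f g) F" using sfield_cont[OF A4] by (simp add: F_def)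
        obtain b' y where ext: "ereal B < b'" "is_sol F (Eset f g) x0 a b' y"
          "\<forall>t. a < ereal t \<and> ereal t < ereal B \<longrightarrow> y t = x t"
          using extend_sol[OF sol[unfolded bB] Kc KE xK Fb Fc Fl] by blast
        have nm: "\<not> (\<exists>a' b' y. a' \<le> a \<and> b \<le> b' \<and> (a' < a \<or> b < b') \<and> is_sol F (Eset f g) x0 a' b' y \<and>
           (\<forall>t. a < ereal t \<and> ereal t < b \<longrightarrow> y t = x t))"
          using ms unfolding is_max_sol_def F_def by blast
        have "a \<le> a \<and> b \<le> b' \<and> (a < a \<or> b < b') \<and> is_sol F (Eset f g) x0 a b' y \<and>
           (\<forall>t. a < ereal t \<and> ereal t < b \<longrightarrow> y t = x t)"
          using ext bB by auto
        then show False using nm by blast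
      qed
    qed
  qed
qed

end
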